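(* Let $d\ge 1$, $\eta>0$, $\sigma>1$, $\alpha\ge 1$, and $0<\epsilon<\eta$. Consider the distribution $\mathcal{D}$ on $\mathbb{R}^d\times\{-1,+1\}$: $y$ uniform on $\{-1,+1\}$, $\bm{\mu}=(\eta,\dots,\eta)$, $\bm{x}\mid y=+1\sim\mathcal{N}(\bm{\mu},\sigma^2 I)$, $\bm{x}\mid y=-1\sim\mathcal{N}(-\alpha\bm{\mu},I)$. Consider linear classifiers $f(\bm{x})=\operatorname{sign}(\bm{w}^\top\bm{x}+b)$ with $\|\bm{w}\|_2=1$, $b\in\mathbb{R}$; let $\mathcal{R}_{nat}(f\mid y)=\Pr(f(\bm{x})\neq y\mid y)$ and $\mathcal{R}_{rob}(f\mid y)=\Pr(\exists\bm{\delta},\|\bm{\delta}\|_\infty\le\epsilon: f(\bm{x}+\bm{\delta})\neq y\mid y)$, and let $f_{nat}$, $f_{rob}$ be minimizers over $(\bm{w},b)$ of the total standard error $\Pr(f(\bm{x})\ne y)$ and the total robust error, respectively. For a classifier $f$ and an error notion $\mathcal{R}$ define the disparity $D(\mathcal{R}(f))=\mathcal{R}(f\mid +1)-\mathcal{R}(f\mid -1)$. Let $A=\frac{2\sqrt{d}\sigma}{\sigma^2-1}$ and $h(\sigma)=\frac{2\sigma^2\log\sigma}{\sigma^2-1}$. Then, both for $(\mathcal{R},f)=(\mathcal{R}_{nat},f_{nat})$ with $g(\alpha)=\frac{1+\alpha}{2}\eta$ and for $(\mathcal{R},f)=(\mathcal{R}_{rob},f_{rob})$ with $g(\alpha)=\frac{1+\alpha}{2}\eta-\epsilon$,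 $$D(\mathcal{R}(f))=\Pr\Big(\tfrac{A}{\sigma}g(\alpha)-\sqrt{A^2g^2(\alpha)+h(\sigma)}<\mathcal{N}(0,1)<-Ag(\alpha)+\sqrt{\big(\tfrac{A}{\sigma}\big)^2g^2(\alpha)+\tfrac{h(\sigma)}{\sigma^2}}\Big),$$ and this disparity decreases monotonically as $\alpha$ increases.
   Context: $\Pr(a<\mathcal{N}(0,1)<b)$ denotes the probability that a standard normal variable lies in $(a,b)$. $I$ is the $d\times d$ identity matrix. *)

theory Defs
  imports "HOL-Analysis.Analysis" "HOL-Probability.Probability"
begin

definition gauss_iso :: "real^'d \<Rightarrow> real \<Rightarrow> (real^'d) measure" where
  "gauss_iso m s = density lborel (\<lambda>x. ennreal (\<Prod>i\<in>UNIV. normal_density (m $ i) s (x $ i)))"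

definition std_normal :: "real measure" where
  "std_normal = density lborel (\<lambda>x. ennreal (std_normal_density x))"

definition cond_dist :: "real \<Rightarrow> real \<Rightarrow> real \<Rightarrow> real \<Rightarrow> (real^'d) measure" where
  "cond_dist \<eta> \<sigma> \<alpha> y =
     (if y = 1 then gauss_iso (\<chi> i. \<eta>) \<sigma> else gauss_iso (\<chi> i. - \<alpha> * \<eta>) 1)"

definition lin_clf :: "real^'d \<Rightarrow> real \<Rightarrow> real^'d \<Rightarrow> real" where
  "lin_clf w b x = sgn (w \<bullet> x + b)"

definition nat_err :: "real \<Rightarrow> real \<Rightarrow> real \<Rightarrow> real^'d \<Rightarrow> real \<Rightarrow> real \<Rightarrow> real" where
  "nat_err \<eta> \<sigma> \<alpha> w b y = measure (cond_dist \<eta> \<sigma> \<alpha> y) {x. lin_clf w b x \<noteq> y}"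

definition rob_err :: "real \<Rightarrow> real \<Rightarrow> real \<Rightarrow> real \<Rightarrow> real^'d \<Rightarrow> real \<Rightarrow> real \<Rightarrow> real" where
  "rob_err \<epsilon> \<eta> \<sigma> \<alpha> w b y = measure (cond_dist \<eta> \<sigma> \<alpha> y)
      {x. \<exists>\<delta>::real^'d. infnorm \<delta> \<le> \<epsilon> \<and> lin_clf w b (x + \<delta>) \<noteq> y}"

definition total_err :: "(real^'d \<Rightarrow> real \<Rightarrow> real \<Rightarrow> real) \<Rightarrow> real^'d \<Rightarrow> real \<Rightarrow> real" where
  "total_err R w b = (1/2) * R w b 1 + (1/2) * R w b (-1)"

definition is_minimizer :: "(real^'d \<Rightarrow> real \<Rightarrow> real \<Rightarrow> real) \<Rightarrow> real^'d \<Rightarrow> real \<Rightarrow> bool" where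
  "is_minimizer R w b \<longleftrightarrow> norm w = 1 \<and>
     (\<forall>w' b'. norm w' = 1 \<longrightarrow> total_err R w b \<le> total_err R w' b')"

definition disparity :: "(real^'d \<Rightarrow> real \<Rightarrow> real \<Rightarrow> real) \<Rightarrow> real^'d \<Rightarrow> real \<Rightarrow> real" where
  "disparity R w b = R w b 1 - R w b (-1)"

definition disp_formula :: "nat \<Rightarrow> real \<Rightarrow> real \<Rightarrow> real" where
  "disp_formula d \<sigma> g =
    (let A = 2 * sqrt (real d) * \<sigma> / (\<sigma>\<^sup>2 - 1);
         h = 2 * \<sigma>\<^sup>2 * ln \<sigma> / (\<sigma>\<^sup>2 - 1)
     in measure std_normal
          {(A / \<sigma>) * g - sqrt (A\<^sup>2 * g\<^sup>2 + h) <..<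
           - A * g + sqrt ((A / \<sigma>)\<^sup>2 * g\<^sup>2 + h / \<sigma>\<^sup>2)})"

end

theory Submission
  imports Defs
begin


definition Phi :: "real \<Rightarrow> real" where "Phi x = measure std_normal {..x}"

lemma ps_std: "prob_space std_normal"
  unfolding std_normal_def by (rule prob_space_normal_density) simp

lemma sets_std[simp]: "sets std_normal = sets borel"
  unfolding std_normal_def by simp

lemma std_singleton: "measure std_normal {x} = 0"
proof -
  have "emeasure std_normal {x} = 0"
    unfolding std_normal_def
    by (subst emeasure_density) (auto intro!: nn_integral_null_set simp: null_sets_def)
  then show ?thesis by (simp add: measure_def)
qed

lemma cont_phi: "continuous_on S std_normal_density"
  unfolding normal_density_def by (intro continuous_intros) auto

lemma std_Icc: "a \<le> b \<Longrightarrow> measure std_normal {a..b} = integral {a..b} std_normal_density"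
proof -
  assume "a \<le> b"
  have "emeasure std_normal {a..b} = (\<integral>\<^sup>+x\<in>{a..b}. ennreal (std_normal_density x)\<partial>lborel)"
    unfolding std_normal_def by (subst emeasure_density) (auto simp: mult.commute)
  also have "\<dots> = ennreal (integral {a..b} std_normal_density)"
  proof (rule set_nn_integral_lborel_eq_integral)
    have "(\<integral>\<^sup>+x\<in>{a..b}. ennreal (std_normal_density x)\<partial>lborel) = emeasure std_normal {a..b}"
      unfolding std_normal_def by (subst emeasure_density) (auto simp: mult.commute)
    also have "\<dots> < \<infinity>" using prob_space.emeasure_space_1[OF ps_std] finite_measure.emeasure_finite[OF prob_space.finite_measure[OF ps_std]] by (simp add: less_top)
    finally show "(\<integral>\<^sup>+x\<in>{a..b}. ennreal (std_normal_density x)\<partial>lborel) < \<infinity>" .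
  qed (auto simp: set_borel_measurable_def)
  moreover have "0 \<le> integral {a..b} std_normal_density"
    by (rule integral_nonneg[OF integrable_continuous_interval[OF cont_phi]]) simp
  ultimately show ?thesis
    by (simp add: measure_def)
qed

lemma Phi_split: "a \<le> x \<Longrightarrow> Phi x = measure std_normal {..<a} + integral {a..x} std_normal_density"
proof -
  assume ax: "a \<le> x"
  interpret prob_space std_normal by (rule ps_std)
  have "{..x} = {..<a} \<union> {a..x}" using ax by auto
  then have "Phi x = measure std_normal ({..<a} \<union> {a..x})" by (simp add: Phi_def)
  also have "\<dots> = measure std_normal {..<a} + measure std_normal {a..x}"
    by (rule finite_measure_Union) auto
  finally show ?thesis using std_Icc[OF ax] by simp
qed

lemma Phi_deriv: "(Phi has_real_derivative std_normal_density x) (at x)"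
proof -
  let ?a = "x - 1" and ?b = "x + 1"
  have "((\<lambda>u. measure std_normal {..<?a} + integral {?a..u} std_normal_density) has_real_derivative std_normal_density x) (at x within {?a..?b})"
    using DERIV_add[OF DERIV_const integral_has_real_derivative[OF cont_phi, of x ?a ?b]] by simp
  then have "((\<lambda>u. measure std_normal {..<?a} + integral {?a..u} std_normal_density) has_real_derivative std_normal_density x) (at x)"
    using at_within_Icc_at[of ?a x ?b] by simp
  then show ?thesis
    by (rule has_field_derivative_transform_within_open[where S="{?a<..<?b}"]) (auto simp: Phi_split[of "x - 1"])
qed

lemma phi_pos: "std_normal_density x > 0" by (rule normal_density_pos) simp

lemma Phi_strict_mono: "a < b \<Longrightarrow> Phi a < Phi b"
  by (rule DERIV_pos_imp_increasing) (auto intro: Phi_deriv phi_pos)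

lemma Phi_less_iff: "Phi a < Phi b \<longleftrightarrow> a < b"
  by (metis Phi_strict_mono linorder_neqE_linordered_idom order_less_asym')

lemma Phi_le_iff: "Phi a \<le> Phi b \<longleftrightarrow> a \<le> b"
  by (meson Phi_less_iff not_le)



lemma normal_le:
  assumes M: "prob_space M" and X: "distributed M lborel X (normal_density \<mu> s)" and s: "0 < s"
  shows "measure M {\<omega>\<in>space M. X \<omega> \<le> c} = Phi ((c - \<mu>) / s)"
proof -
  interpret prob_space M by (rule M)
  have Y: "distributed M lborel (\<lambda>x. (X x - \<mu>) / s) std_normal_density"
    using normal_standard_normal_convert[OF s] X by simp
  have meas: "(\<lambda>x. (X x - \<mu>) / s) \<in> measurable M lborel"
    using Y by (simp add: distributed_def)
  have "{\<omega>\<in>space M. X \<omega> \<le> c} = (\<lambda>x. (X x - \<mu>) / s) -` {..(c - \<mu>) / s} \<inter> space M"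
    using s by (auto simp: divide_right_mono field_simps)
  then have "measure M {\<omega>\<in>space M. X \<omega> \<le> c} = measure (distr M lborel (\<lambda>x. (X x - \<mu>) / s)) {..(c - \<mu>) / s}"
    by (simp add: measure_distr[OF meas])
  also have "\<dots> = Phi ((c - \<mu>) / s)"
    using distributed_distr_eq_density[OF Y] by (simp add: Phi_def std_normal_def)
  finally show ?thesis .
qed

lemma normal_ge:
  assumes M: "prob_space M" and X: "distributed M lborel X (normal_density \<mu> s)" and s: "0 < s"
  shows "measure M {\<omega>\<in>space M. X \<omega> \<ge> c} = Phi ((\<mu> - c) / s)"
proof -
  interpret prob_space M by (rule M)
  have "distributed M lborel (\<lambda>x. 0 + (-1) * X x) (normal_density (0 + (-1) * \<mu>) (\<bar>-1\<bar> * s))"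
    by (rule normal_density_affine[OF X s]) simp
  then have Y: "distributed M lborel (\<lambda>x. - X x) (normal_density (- \<mu>) s)" by simp
  have "{\<omega>\<in>space M. X \<omega> \<ge> c} = {\<omega>\<in>space M. - X \<omega> \<le> - c}" by auto
  then show ?thesis using normal_le[OF M Y s, of "-c"] by (simp add: field_simps)
qed

lemma id_distributed: "0 < s \<Longrightarrow> distributed (density lborel (normal_density \<mu> s)) lborel (\<lambda>x. x) (normal_density \<mu> s)"
  unfolding distributed_def
  by (auto simp: distr_id2 )

lemma Phi_neg: "Phi (- x) = 1 - Phi x"
proof -
  interpret P: prob_space std_normal by (rule ps_std)
  have D: "distributed std_normal lborel (\<lambda>x. x) (normal_density 0 1)"
    unfolding std_normal_def by (rule id_distributed) simp
  have "measure std_normal {\<omega>\<in>space std_normal. \<omega> \<ge> x} = Phi (- x)"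
    using normal_ge[OF ps_std D, of x] by simp
  moreover have "{\<omega>\<in>space std_normal. \<omega> \<ge> x} = space std_normal - {..<x}"
    by (auto simp: std_normal_def)
  moreover have "measure std_normal {..<x} = Phi x"
  proof -
    have "measure std_normal ({..<x} \<union> {x}) = measure std_normal {..<x} + measure std_normal {x}"
      by (rule P.finite_measure_Union) auto
    moreover have "{..<x} \<union> {x} = {..x}" by auto
    ultimately have "Phi x = measure std_normal {..<x} + measure std_normal {x}"
      unfolding Phi_def by simp
    then show ?thesis by (simp add: std_singleton)
  qed
  ultimately show ?thesis
    by (simp add: P.prob_compl)
qed

lemma std_Ioo: "a < b \<Longrightarrow> measure std_normal {a<..<b} = Phi b - Phi a"
proof -
  assume ab: "a < b"
  interpret P: prob_space std_normal by (rule ps_std)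
  have 1: "measure std_normal ({..a} \<union> {a<..<b}) = Phi a + measure std_normal {a<..<b}"
    unfolding Phi_def by (rule P.finite_measure_Union) auto
  have 2: "measure std_normal ({..a} \<union> {a<..<b} \<union> {b}) = measure std_normal ({..a} \<union> {a<..<b}) + measure std_normal {b}"
    by (rule P.finite_measure_Union) (use ab in auto)
  have "{..a} \<union> {a<..<b} \<union> {b} = {..b}" using ab by auto
  then show ?thesis using 1 2 by (simp add: std_singleton Phi_def)
qed



lemma density_PiM:
  fixes g :: "'i \<Rightarrow> real \<Rightarrow> ennreal"
  assumes I: "finite I" and g[measurable]: "\<And>i. g i \<in> borel_measurable borel"
    and sf: "\<And>i. sigma_finite_measure (density lborel (g i))"
  shows "density (PiM I (\<lambda>_. lborel)) (\<lambda>x. \<Prod>i\<in>I. g i (x i)) = PiM I (\<lambda>i. density lborel (g i))"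
proof -
  interpret PS: product_sigma_finite "\<lambda>i. density lborel (g i)"
    unfolding product_sigma_finite_def using sf by auto
  interpret PL: product_sigma_finite "\<lambda>_::'i. lborel :: real measure"
    unfolding product_sigma_finite_def using sigma_finite_lborel by auto
  show ?thesis
  proof (rule PS.PiM_eqI[OF I])
    show "sets (density (PiM I (\<lambda>_. lborel)) (\<lambda>x. \<Prod>i\<in>I. g i (x i))) = sets (PiM I (\<lambda>i. density lborel (g i)))"
      unfolding sets_density by (rule sets_PiM_cong) simp_all
  next
    fix A assume A: "\<And>i. i \<in> I \<Longrightarrow> A i \<in> sets (density lborel (g i))"
    then have A': "\<And>i. i \<in> I \<Longrightarrow> A i \<in> sets borel" by simp
    have PE: "Pi\<^sub>E I A \<in> sets (PiM I (\<lambda>_. lborel))"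
      using A' by (intro sets_PiM_I_finite I) auto
    have "emeasure (density (PiM I (\<lambda>_. lborel)) (\<lambda>x. \<Prod>i\<in>I. g i (x i))) (Pi\<^sub>E I A)
        = (\<integral>\<^sup>+x. (\<Prod>i\<in>I. g i (x i)) * indicator (Pi\<^sub>E I A) x \<partial>PiM I (\<lambda>_. lborel))"
      using PE by (subst emeasure_density) auto
    also have "\<dots> = (\<integral>\<^sup>+x. (\<Prod>i\<in>I. g i (x i) * indicator (A i) (x i)) \<partial>PiM I (\<lambda>_. lborel))"
    proof (rule nn_integral_cong)
      fix x assume "x \<in> space (PiM I (\<lambda>_. lborel :: real measure))"
      then have "x \<in> extensional I" by (simp add: space_PiM PiE_def)
      then have "indicator (Pi\<^sub>E I A) x = (\<Prod>i\<in>I. indicator (A i) (x i) :: ennreal)"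
        by (auto simp: indicator_def PiE_def Pi_def prod_zero_iff I)
      then show "(\<Prod>i\<in>I. g i (x i)) * indicator (Pi\<^sub>E I A) x = (\<Prod>i\<in>I. g i (x i) * indicator (A i) (x i))"
        by (simp add: prod.distrib)
    qed
    also have "\<dots> = (\<Prod>i\<in>I. \<integral>\<^sup>+y. g i y * indicator (A i) y \<partial>lborel)"
      using A' by (subst PL.product_nn_integral_prod[OF I]) auto
    also have "\<dots> = (\<Prod>i\<in>I. emeasure (density lborel (g i)) (A i))"
      using A' by (intro prod.cong refl) (simp add: emeasure_density)
    finally show "emeasure (density (PiM I (\<lambda>_. lborel)) (\<lambda>x. \<Prod>i\<in>I. g i (x i))) (Pi\<^sub>E I A) = (\<Prod>i\<in>I. emeasure (density lborel (g i)) (A i))" .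
  qed
qed

lemma T_comp: "(\<Sum>b\<in>Basis. f b *\<^sub>R b :: real^'d) $ i = f (axis i 1)"
proof -
  have ax: "axis i (1::real) \<in> (Basis :: (real^'d) set)" by (auto simp: Basis_vec_def)
  have "(\<Sum>b\<in>Basis. f b *\<^sub>R b :: real^'d) $ i = (\<Sum>b\<in>Basis. f b *\<^sub>R b :: real^'d) \<bullet> axis i 1"
    by (simp add: cart_eq_inner_axis)
  also have "\<dots> = (\<Sum>b\<in>(Basis::(real^'d) set). f b * (b \<bullet> axis i 1))"
    by (simp add: inner_sum_left)
  also have "\<dots> = (\<Sum>b\<in>(Basis::(real^'d) set). if b = axis i 1 then f b else 0)"
    using ax by (intro sum.cong refl) (auto simp: inner_Basis)
  also have "\<dots> = f (axis i 1)" using ax by simp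
  finally show ?thesis .
qed

lemma prod_reindex_Basis:
  "(\<Prod>i\<in>UNIV. F (axis i (1::real)) :: 'a::comm_monoid_mult) = (\<Prod>b\<in>(Basis :: (real^'d) set). F b)"
proof -
  have "(Basis :: (real^'d) set) = (\<lambda>i. axis i 1) ` UNIV" by (auto simp: Basis_vec_def)
  moreover have "inj (\<lambda>i::'d. axis i (1::real))" by (auto simp: inj_def axis_eq_axis)
  ultimately show ?thesis using prod.reindex[of "\<lambda>i::'d. axis i (1::real)" UNIV F] by (simp add: o_def)
qed

lemma gauss_as_distr:
  fixes m :: "real^'d"
  assumes s: "0 < s"
  shows "gauss_iso m s = distr (PiM Basis (\<lambda>b. density lborel (normal_density (m \<bullet> b) s))) borel (\<lambda>f. \<Sum>b\<in>Basis. f b *\<^sub>R b)"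
proof -
  let ?T = "\<lambda>f. \<Sum>b\<in>(Basis::(real^'d) set). f b *\<^sub>R b"
  let ?G = "\<lambda>x::real^'d. ennreal (\<Prod>i\<in>UNIV. normal_density (m $ i) s (x $ i))"
  have "gauss_iso m s = density (distr (PiM Basis (\<lambda>b. lborel)) borel ?T) ?G"
    unfolding gauss_iso_def by (subst lborel_eq[where 'a="real^'d"]) simp
  also have "\<dots> = distr (density (PiM Basis (\<lambda>b. lborel)) (\<lambda>x. ?G (?T x))) borel ?T"
    by (rule density_distr) measurable
  also have "(\<lambda>x. ?G (?T x)) = (\<lambda>x. \<Prod>b\<in>Basis. ennreal (normal_density (m \<bullet> b) s (x b)))"
  proof
    fix x :: "real^'d \<Rightarrow> real"
    have "?G (?T x) = ennreal (\<Prod>i\<in>UNIV. normal_density (m \<bullet> axis i 1) s (x (axis i 1)))"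
      by (simp add: T_comp cart_eq_inner_axis)
    also have "\<dots> = ennreal (\<Prod>b\<in>Basis. normal_density (m \<bullet> b) s (x b))"
      by (subst prod_reindex_Basis[where F="\<lambda>b. normal_density (m \<bullet> b) s (x b)"]) rule
    also have "\<dots> = (\<Prod>b\<in>Basis. ennreal (normal_density (m \<bullet> b) s (x b)))"
      by (simp add: prod_ennreal normal_density_nonneg)
    finally show "?G (?T x) = (\<Prod>b\<in>Basis. ennreal (normal_density (m \<bullet> b) s (x b)))" .
  qed
  also have "density (PiM Basis (\<lambda>b. lborel)) (\<lambda>x. \<Prod>b\<in>Basis. ennreal (normal_density (m \<bullet> b) s (x b)))
      = PiM Basis (\<lambda>b. density lborel (normal_density (m \<bullet> b) s))"
    by (rule density_PiM) (auto intro: prob_space_imp_sigma_finite prob_space_normal_density s)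
  finally show ?thesis .
qed



lemma gauss_proj:
  fixes m w :: "real^'d"
  assumes s: "0 < s" and w: "norm w = 1"
  shows "measure (gauss_iso m s) {x. w \<bullet> x \<le> c} = Phi ((c - w \<bullet> m) / s)"
    and "measure (gauss_iso m s) {x. w \<bullet> x \<ge> c} = Phi ((w \<bullet> m - c) / s)"
proof -
  define M where "M = (\<lambda>b::real^'d. density lborel (normal_density (m \<bullet> b) s))"
  define Q where "Q = PiM Basis M"
  define J where "J = {b\<in>(Basis::(real^'d) set). w \<bullet> b \<noteq> 0}"
  define T where "T = (\<lambda>f. \<Sum>b\<in>(Basis::(real^'d) set). f b *\<^sub>R b)"
  have Mps: "\<And>b. prob_space (M b)" unfolding M_def by (rule prob_space_normal_density) (use s in simp)
  have setsM[simp]: "\<And>b. sets (M b) = sets borel" unfolding M_def by simp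
  have Qps: "prob_space Q" unfolding Q_def by (rule prob_space_PiM) (use Mps in auto)
  interpret Q: prob_space Q by (rule Qps)
  interpret PP: product_prob_space M Basis
    unfolding product_prob_space_def product_sigma_finite_def product_prob_space_axioms_def
    using Mps by (auto intro: prob_space_imp_sigma_finite)
  have J: "finite J" "J \<subseteq> Basis" unfolding J_def by auto
  have Jne: "J \<noteq> {}"
  proof
    assume "J = {}"
    then have "\<forall>b\<in>Basis. w \<bullet> b = 0" unfolding J_def by auto
    then have "w = 0" by (simp add: euclidean_all_zero_iff)
    with w show False by simp
  qed
  have comp: "\<And>b. b \<in> Basis \<Longrightarrow> distr Q (M b) (\<lambda>f. f b) = M b"
    unfolding Q_def by (rule distr_PiM_component) (use Mps in auto)
  have ind0: "Q.indep_vars M (\<lambda>b f. f b) Basis"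
  proof (subst Q.indep_vars_iff_distr_eq_PiM')
    show "Basis \<noteq> {}" by simp
    show "\<And>i. i \<in> Basis \<Longrightarrow> (\<lambda>f. f i) \<in> measurable Q (M i)"
      using measurable_component_singleton[of _ Basis M] unfolding Q_def by blast
    have "distr Q (Pi\<^sub>M Basis M) (\<lambda>x. \<lambda>i\<in>Basis. x i) = distr Q Q (\<lambda>x. x)"
      by (rule distr_cong) (auto simp: Q_def space_PiM)
    also have "\<dots> = Q" by simp
    also have "\<dots> = (\<Pi>\<^sub>M i\<in>Basis. distr Q (M i) (\<lambda>f. f i))"
      unfolding Q_def by (rule PiM_cong) (auto simp: comp[unfolded Q_def])
    finally show "distr Q (Pi\<^sub>M Basis M) (\<lambda>x. \<lambda>i\<in>Basis. x i) = (\<Pi>\<^sub>M i\<in>Basis. distr Q (M i) (\<lambda>f. f i))" .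
  qed
  have ind: "Q.indep_vars (\<lambda>_. borel) (\<lambda>b f. (w \<bullet> b) * f b) J"
    using Q.indep_vars_subset[OF Q.indep_vars_compose2[OF ind0, of "\<lambda>b x. (w \<bullet> b) * x" "\<lambda>_. borel"] J(2)]
    by (simp add: measurable_cong_sets[OF setsM refl])
  have compm: "(\<lambda>f. f b) \<in> measurable Q borel" if "b \<in> Basis" for b :: "real^'d"
  proof -
    have "(\<lambda>f. f b) \<in> measurable Q (M b)" using measurable_component_singleton[OF that, of M] unfolding Q_def .
    then show ?thesis using measurable_cong_sets[OF refl setsM[of b], of Q] by simp
  qed
  have dist1: "\<And>b. b \<in> Basis \<Longrightarrow> distributed Q lborel (\<lambda>f. f b) (normal_density (m \<bullet> b) s)"
  proof -
    fix b :: "real^'d" assume b: "b \<in> Basis"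
    have "distr Q lborel (\<lambda>f. f b) = distr Q (M b) (\<lambda>f. f b)"
      by (rule distr_cong) auto
    also have "\<dots> = density lborel (normal_density (m \<bullet> b) s)" using comp[OF b] by (simp add: M_def)
    finally show "distributed Q lborel (\<lambda>f. f b) (normal_density (m \<bullet> b) s)"
      unfolding distributed_def using b compm by auto
  qed
  have dist2: "\<And>b. b \<in> J \<Longrightarrow> distributed Q lborel (\<lambda>f. (w \<bullet> b) * f b) (normal_density ((w \<bullet> b) * (m \<bullet> b)) (\<bar>w \<bullet> b\<bar> * s))"
  proof -
    fix b :: "real^'d" assume b: "b \<in> J"
    then have "distributed Q lborel (\<lambda>f. 0 + (w \<bullet> b) * f b) (normal_density (0 + (w \<bullet> b) * (m \<bullet> b)) (\<bar>w \<bullet> b\<bar> * s))"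
      by (intro Q.normal_density_affine dist1 s) (auto simp: J_def)
    then show "?thesis b" by simp
  qed
  have pos: "\<And>b. b \<in> J \<Longrightarrow> 0 < \<bar>w \<bullet> b\<bar> * s" using s by (auto simp: J_def)
  have sumd: "distributed Q lborel (\<lambda>f. \<Sum>b\<in>J. (w \<bullet> b) * f b)
      (normal_density (\<Sum>b\<in>J. (w \<bullet> b) * (m \<bullet> b)) (sqrt (\<Sum>b\<in>J. (\<bar>w \<bullet> b\<bar> * s)\<^sup>2)))"
    by (rule Q.sum_indep_normal[OF J(1) Jne ind pos dist2])
  have e1: "(\<Sum>b\<in>J. (w \<bullet> b) * (m \<bullet> b)) = w \<bullet> m"
  proof -
    have "(\<Sum>b\<in>J. (w \<bullet> b) * (m \<bullet> b)) = (\<Sum>b\<in>Basis. (w \<bullet> b) * (m \<bullet> b))"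
      by (rule sum.mono_neutral_left) (auto simp: J_def)
    then show ?thesis by (simp add: euclidean_inner[of w m])
  qed
  have e2: "sqrt (\<Sum>b\<in>J. (\<bar>w \<bullet> b\<bar> * s)\<^sup>2) = s"
  proof -
    have "(\<Sum>b\<in>J. (\<bar>w \<bullet> b\<bar> * s)\<^sup>2) = (\<Sum>b\<in>Basis. (w \<bullet> b) * (w \<bullet> b)) * s\<^sup>2"
    proof -
      have "(\<Sum>b\<in>J. (\<bar>w \<bullet> b\<bar> * s)\<^sup>2) = (\<Sum>b\<in>Basis. (\<bar>w \<bullet> b\<bar> * s)\<^sup>2)"
        by (rule sum.mono_neutral_left) (auto simp: J_def)
      then show ?thesis by (simp add: sum_distrib_right power_mult_distrib flip: power2_eq_square)
    qed
    also have "(\<Sum>b\<in>Basis. (w \<bullet> b) * (w \<bullet> b)) = w \<bullet> w" by (simp add: euclidean_inner[of w w])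
    also have "w \<bullet> w = 1" using w by (simp add: power2_norm_eq_inner[symmetric])
    finally show ?thesis using s by simp
  qed
  have sumd': "distributed Q lborel (\<lambda>f. \<Sum>b\<in>J. (w \<bullet> b) * f b) (normal_density (w \<bullet> m) s)"
    using sumd by (simp only: e1 e2)
  have G: "gauss_iso m s = distr Q borel T"
    unfolding Q_def M_def T_def by (rule gauss_as_distr[OF s])
  have Tm: "T \<in> measurable Q borel" unfolding T_def
    by (intro borel_measurable_sum borel_measurable_scaleR compm measurable_const) auto
  have wT: "\<And>f. w \<bullet> T f = (\<Sum>b\<in>J. (w \<bullet> b) * f b)"
  proof -
    fix f
    have "w \<bullet> T f = (\<Sum>b\<in>Basis. (w \<bullet> b) * f b)" unfolding T_def by (simp add: inner_sum_right mult.commute)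
    also have "\<dots> = (\<Sum>b\<in>J. (w \<bullet> b) * f b)"
      by (rule sum.mono_neutral_right) (auto simp: J_def)
    finally show "w \<bullet> T f = (\<Sum>b\<in>J. (w \<bullet> b) * f b)" .
  qed
  have "measure (gauss_iso m s) {x. w \<bullet> x \<le> c} = measure Q (T -` {x. w \<bullet> x \<le> c} \<inter> space Q)"
    unfolding G by (rule measure_distr[OF Tm]) measurable
  also have "T -` {x. w \<bullet> x \<le> c} \<inter> space Q = {f\<in>space Q. (\<Sum>b\<in>J. (w \<bullet> b) * f b) \<le> c}"
    by (auto simp: wT)
  also have "measure Q \<dots> = Phi ((c - w \<bullet> m) / s)"
    by (rule normal_le[OF Qps sumd' s])
  finally show "measure (gauss_iso m s) {x. w \<bullet> x \<le> c} = Phi ((c - w \<bullet> m) / s)" .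
  have "measure (gauss_iso m s) {x. w \<bullet> x \<ge> c} = measure Q (T -` {x. w \<bullet> x \<ge> c} \<inter> space Q)"
    unfolding G by (rule measure_distr[OF Tm]) measurable
  also have "T -` {x. w \<bullet> x \<ge> c} \<inter> space Q = {f\<in>space Q. (\<Sum>b\<in>J. (w \<bullet> b) * f b) \<ge> c}"
    by (auto simp: wT)
  also have "measure Q \<dots> = Phi ((w \<bullet> m - c) / s)"
    by (rule normal_ge[OF Qps sumd' s])
  finally show "measure (gauss_iso m s) {x. w \<bullet> x \<ge> c} = Phi ((w \<bullet> m - c) / s)" .
qed



definition Ssum :: "real^'d \<Rightarrow> real" where "Ssum w = (\<Sum>i\<in>UNIV. w $ i)"
definition L1 :: "real^'d \<Rightarrow> real" where "L1 w = (\<Sum>i\<in>UNIV. \<bar>w $ i\<bar>)"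

lemma inner_const: "w \<bullet> (\<chi> i. c) = c * Ssum w"
  by (simp add: inner_vec_def Ssum_def sum_distrib_left mult.commute)

lemma abs_inner_le: "\<bar>w \<bullet> \<delta>\<bar> \<le> L1 w * infnorm (\<delta> :: real^'d)"
proof -
  have "\<bar>w \<bullet> \<delta>\<bar> = \<bar>\<Sum>i\<in>UNIV. w $ i * \<delta> $ i\<bar>" by (simp add: inner_vec_def)
  also have "\<dots> \<le> (\<Sum>i\<in>UNIV. \<bar>w $ i * \<delta> $ i\<bar>)" by (rule sum_abs)
  also have "\<dots> \<le> (\<Sum>i\<in>UNIV. \<bar>w $ i\<bar> * infnorm \<delta>)"
    by (intro sum_mono) (simp add: abs_mult mult_left_mono component_le_infnorm_cart)
  finally show ?thesis by (simp add: L1_def sum_distrib_right)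
qed

lemma infnorm_le_cart: "(\<And>i. \<bar>x $ i\<bar> \<le> e) \<Longrightarrow> infnorm (x :: real^'d) \<le> e"
  unfolding infnorm_cart by (rule cSup_least) auto

lemma inner_sgn: "w \<bullet> (\<chi> i. c * sgn (w $ i)) = c * L1 w"
  by (simp add: inner_vec_def L1_def sum_distrib_left abs_sgn mult.commute mult.left_commute)

lemma rob_set_pos:
  assumes e: "0 \<le> \<epsilon>"
  shows "{x. \<exists>\<delta>::real^'d. infnorm \<delta> \<le> \<epsilon> \<and> lin_clf w b (x + \<delta>) \<noteq> 1} = {x. w \<bullet> x \<le> \<epsilon> * L1 w - b}"
proof safe
  fix x \<delta> :: "real^'d" assume d: "infnorm \<delta> \<le> \<epsilon>" and ne: "lin_clf w b (x + \<delta>) \<noteq> 1"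
  have "w \<bullet> (x + \<delta>) + b \<le> 0" using ne by (auto simp: lin_clf_def sgn_if split: if_splits)
  moreover have "- (w \<bullet> \<delta>) \<le> \<epsilon> * L1 w"
    using abs_inner_le[of w \<delta>] d mult_left_mono[OF d, of "L1 w"]
    by (auto simp: L1_def sum_nonneg mult.commute)
  ultimately show "w \<bullet> x \<le> \<epsilon> * L1 w - b" by (simp add: inner_add_right)
next
  fix x :: "real^'d" assume x: "w \<bullet> x \<le> \<epsilon> * L1 w - b"
  let ?d = "\<chi> i. - \<epsilon> * sgn (w $ i)"
  have "infnorm ?d \<le> \<epsilon>" using e by (intro infnorm_le_cart) (auto simp: abs_mult abs_sgn_eq)
  moreover have "lin_clf w b (x + ?d) \<noteq> 1"
    using x inner_sgn[of w "-\<epsilon>"] by (auto simp: lin_clf_def inner_add_right sgn_if)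
  ultimately show "\<exists>\<delta>::real^'d. infnorm \<delta> \<le> \<epsilon> \<and> lin_clf w b (x + \<delta>) \<noteq> 1" by blast
qed

lemma rob_set_neg:
  assumes e: "0 \<le> \<epsilon>"
  shows "{x. \<exists>\<delta>::real^'d. infnorm \<delta> \<le> \<epsilon> \<and> lin_clf w b (x + \<delta>) \<noteq> -1} = {x. w \<bullet> x \<ge> - b - \<epsilon> * L1 w}"
proof safe
  fix x \<delta> :: "real^'d" assume d: "infnorm \<delta> \<le> \<epsilon>" and ne: "lin_clf w b (x + \<delta>) \<noteq> -1"
  have "w \<bullet> (x + \<delta>) + b \<ge> 0" using ne by (auto simp: lin_clf_def sgn_if split: if_splits)
  moreover have "w \<bullet> \<delta> \<le> \<epsilon> * L1 w"
    using abs_inner_le[of w \<delta>] d mult_left_mono[OF d, of "L1 w"]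
    by (auto simp: L1_def sum_nonneg mult.commute)
  ultimately show "w \<bullet> x \<ge> - b - \<epsilon> * L1 w" by (simp add: inner_add_right)
next
  fix x :: "real^'d" assume x: "w \<bullet> x \<ge> - b - \<epsilon> * L1 w"
  let ?d = "\<chi> i. \<epsilon> * sgn (w $ i)"
  have "infnorm ?d \<le> \<epsilon>" using e by (intro infnorm_le_cart) (auto simp: abs_mult abs_sgn_eq)
  moreover have "lin_clf w b (x + ?d) \<noteq> -1"
    using x inner_sgn[of w "\<epsilon>"] by (auto simp: lin_clf_def inner_add_right sgn_if)
  ultimately show "\<exists>\<delta>::real^'d. infnorm \<delta> \<le> \<epsilon> \<and> lin_clf w b (x + \<delta>) \<noteq> -1" by blast
qed

lemma nat_err_pos:
  assumes "0 < \<sigma>" "norm (w::real^'d) = 1"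
  shows "nat_err \<eta> \<sigma> \<alpha> w b 1 = Phi ((- b - \<eta> * Ssum w) / \<sigma>)"
proof -
  have "{x. lin_clf w b x \<noteq> 1} = {x. w \<bullet> x \<le> - b}"
    by (auto simp: lin_clf_def sgn_if split: if_splits)
  then show ?thesis
    unfolding nat_err_def cond_dist_def using gauss_proj(1)[OF assms, of "\<chi> i. \<eta>" "- b"]
    by (simp add: inner_const)
qed

lemma nat_err_neg:
  assumes "norm (w::real^'d) = 1"
  shows "nat_err \<eta> \<sigma> \<alpha> w b (-1) = Phi (b - \<alpha> * \<eta> * Ssum w)"
proof -
  have "{x. lin_clf w b x \<noteq> -1} = {x. w \<bullet> x \<ge> - b}"
    by (auto simp: lin_clf_def sgn_if split: if_splits)
  then show ?thesis
    unfolding nat_err_def cond_dist_def using gauss_proj(2)[OF _ assms, of 1 "\<chi> i. - \<alpha> * \<eta>" "- b"]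
    by (simp add: inner_const)
qed

lemma rob_err_pos:
  assumes "0 < \<sigma>" "norm (w::real^'d) = 1" "0 \<le> \<epsilon>"
  shows "rob_err \<epsilon> \<eta> \<sigma> \<alpha> w b 1 = Phi ((- b - \<eta> * Ssum w + \<epsilon> * L1 w) / \<sigma>)"
  unfolding rob_err_def cond_dist_def rob_set_pos[OF assms(3)]
  using gauss_proj(1)[OF assms(1,2), of "\<chi> i. \<eta>" "\<epsilon> * L1 w - b"]
  by (simp add: inner_const algebra_simps)

lemma rob_err_neg:
  assumes "norm (w::real^'d) = 1" "0 \<le> \<epsilon>"
  shows "rob_err \<epsilon> \<eta> \<sigma> \<alpha> w b (-1) = Phi (b - \<alpha> * \<eta> * Ssum w + \<epsilon> * L1 w)"
  unfolding rob_err_def cond_dist_def rob_set_neg[OF assms(2)]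
  using gauss_proj(2)[OF _ assms(1), of 1 "\<chi> i. - \<alpha> * \<eta>" "- b - \<epsilon> * L1 w"]
  by (simp add: inner_const algebra_simps)



definition hh :: "real \<Rightarrow> real" where "hh \<sigma> = 2 * \<sigma>\<^sup>2 * ln \<sigma> / (\<sigma>\<^sup>2 - 1)"
definition Dfun :: "real \<Rightarrow> real \<Rightarrow> real" where
  "Dfun \<sigma> c = Phi (- c + sqrt (c\<^sup>2 + hh \<sigma>) / \<sigma>) - Phi (c / \<sigma> - sqrt (c\<^sup>2 + hh \<sigma>))"

lemma Phi_chain[derivative_intros]:
  "(f has_real_derivative f') (at x within S) \<Longrightarrow>
   ((\<lambda>x. Phi (f x)) has_real_derivative std_normal_density (f x) * f') (at x within S)"
  by (rule DERIV_chain2[OF Phi_deriv])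

lemma phi_shift: "std_normal_density a = std_normal_density b * exp ((b\<^sup>2 - a\<^sup>2) / 2)"
proof -
  have "exp (- (b\<^sup>2 / 2)) * exp ((b\<^sup>2 - a\<^sup>2) / 2) = exp (- (a\<^sup>2 / 2))"
    by (simp add: exp_add[symmetric] diff_divide_distrib)
  then show ?thesis unfolding std_normal_density_def by (simp add: mult.assoc)
qed

lemma phi_even: "std_normal_density (- a) = std_normal_density a"
  unfolding std_normal_density_def by simp

lemma hh_pos: "1 < \<sigma> \<Longrightarrow> 0 < hh \<sigma>"
  unfolding hh_def by (intro divide_pos_pos mult_pos_pos) (auto simp: power_less_one_iff one_less_power)

lemma F_fac:
  assumes s: "1 < \<sigma>" and c_def: "c = \<sigma> * D / (\<sigma>\<^sup>2 - 1)"
  shows "\<sigma>\<^sup>2 * t\<^sup>2 - (t + D)\<^sup>2 - 2 * \<sigma>\<^sup>2 * ln \<sigma> = (\<sigma>\<^sup>2 - 1) * ((t - c / \<sigma>)\<^sup>2 - (c\<^sup>2 + hh \<sigma>))"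
proof -
  have X: "\<sigma>\<^sup>2 - 1 \<noteq> 0" "\<sigma> \<noteq> 0" using s by (auto simp: power2_eq_square) (smt (verit) mult_less_cancel_left1)
  have "(\<sigma>\<^sup>2 - 1) * hh \<sigma> = 2 * \<sigma>\<^sup>2 * ln \<sigma>" unfolding hh_def using X by simp
  moreover have "(\<sigma>\<^sup>2 - 1) * ((t - c / \<sigma>)\<^sup>2 - c\<^sup>2) = \<sigma>\<^sup>2 * t\<^sup>2 - (t + D)\<^sup>2"
  proof -
    define X where "X = \<sigma>\<^sup>2 - 1"
    have X0: "X \<noteq> 0" using X unfolding X_def by simp
    have e1: "c / \<sigma> = D / X" unfolding c_def X_def using X by simp
    have e2: "c = \<sigma> * D / X" unfolding c_def X_def by simp
    have "X * ((t - D / X)\<^sup>2 - (\<sigma> * D / X)\<^sup>2) = X * t\<^sup>2 - 2 * t * D + (1 - \<sigma>\<^sup>2) * D\<^sup>2 / X"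
      using X0 by (simp add: field_simps power2_eq_square)
    also have "(1 - \<sigma>\<^sup>2) * D\<^sup>2 / X = - D\<^sup>2" using X0 unfolding X_def by (simp add: field_simps)
    finally have "X * ((t - D / X)\<^sup>2 - (\<sigma> * D / X)\<^sup>2) = X * t\<^sup>2 - 2 * t * D - D\<^sup>2" by simp
    then show ?thesis unfolding e1 e2[symmetric] X_def[symmetric]
      by (simp add: X_def algebra_simps power2_eq_square)
  qed
  ultimately show ?thesis by (simp add: algebra_simps)
qed

lemma gen: "(a::real) * (1 / s) = b * e \<Longrightarrow> a * (- 1 / s) + b = b * (1 - e)"
proof -
  assume h: "a * (1 / s) = b * e"
  have "a * (- 1 / s) = - (a * (1 / s))" by simp
  then show ?thesis using h by (simp add: right_diff_distrib)
qed

lemma Eprime_eq: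
  assumes s: "1 < \<sigma>" and c_def: "c = \<sigma> * (p + q) / (\<sigma>\<^sup>2 - 1)"
  shows "std_normal_density ((- x - p) / \<sigma>) * (- 1 / \<sigma>) + std_normal_density (x - q)
     = std_normal_density (x - q) * (1 - exp ((\<sigma>\<^sup>2 - 1) * ((x - q - c / \<sigma>)\<^sup>2 - (c\<^sup>2 + hh \<sigma>)) / (2 * \<sigma>\<^sup>2)))"
proof -
  let ?t = "x - q" and ?D = "p + q"
  have s0: "\<sigma> > 0" using s by simp
  have "std_normal_density ((- x - p) / \<sigma>) = std_normal_density ((?t + ?D) / \<sigma>)"
    by (subst phi_even[symmetric]) (simp add: algebra_simps minus_divide_left)
  also have "\<dots> = std_normal_density ?t * exp ((?t\<^sup>2 - ((?t + ?D) / \<sigma>)\<^sup>2) / 2)"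
    by (rule phi_shift)
  finally have 1: "std_normal_density ((- x - p) / \<sigma>) * (1 / \<sigma>)
     = std_normal_density ?t * (exp ((?t\<^sup>2 - ((?t + ?D) / \<sigma>)\<^sup>2) / 2) / exp (ln \<sigma>))"
    using s0 by simp
  have "(?t\<^sup>2 - ((?t + ?D) / \<sigma>)\<^sup>2) / 2 - ln \<sigma> = (\<sigma>\<^sup>2 * ?t\<^sup>2 - (?t + ?D)\<^sup>2 - 2 * \<sigma>\<^sup>2 * ln \<sigma>) / (2 * \<sigma>\<^sup>2)"
    using s0 by (simp add: field_simps power2_eq_square)
  also have "\<dots> = (\<sigma>\<^sup>2 - 1) * ((?t - c / \<sigma>)\<^sup>2 - (c\<^sup>2 + hh \<sigma>)) / (2 * \<sigma>\<^sup>2)"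
    by (subst F_fac[OF s c_def]) simp
  finally have 2: "exp ((?t\<^sup>2 - ((?t + ?D) / \<sigma>)\<^sup>2) / 2) / exp (ln \<sigma>) = exp ((\<sigma>\<^sup>2 - 1) * ((?t - c / \<sigma>)\<^sup>2 - (c\<^sup>2 + hh \<sigma>)) / (2 * \<sigma>\<^sup>2))"
    by (simp add: exp_diff[symmetric])
  have 3: "std_normal_density ((- x - p) / \<sigma>) * (1 / \<sigma>)
     = std_normal_density ?t * exp ((\<sigma>\<^sup>2 - 1) * ((?t - c / \<sigma>)\<^sup>2 - (c\<^sup>2 + hh \<sigma>)) / (2 * \<sigma>\<^sup>2))"
    using 1 unfolding 2 .
  show ?thesis using gen[OF 3] by simp
qed

lemma Eprime_deriv:
  "\<sigma> \<noteq> 0 \<Longrightarrow> ((\<lambda>x. Phi ((- x - p) / \<sigma>) + Phi (x - q)) has_real_derivative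
     std_normal_density ((- x - p) / \<sigma>) * (- 1 / \<sigma>) + std_normal_density (x - q)) (at x)"
  by (auto intro!: derivative_eq_intros)

lemma core_min:
  assumes s: "1 < \<sigma>" and c_def: "c = \<sigma> * (p + q) / (\<sigma>\<^sup>2 - 1)"
    and min: "\<And>b'. Phi ((- b - p) / \<sigma>) + Phi (b - q) \<le> Phi ((- b' - p) / \<sigma>) + Phi (b' - q)"
  shows "b = q + c / \<sigma> - sqrt (c\<^sup>2 + hh \<sigma>)"
proof -
  define E where "E = (\<lambda>x. Phi ((- x - p) / \<sigma>) + Phi (x - q))"
  define k where "k = sqrt (c\<^sup>2 + hh \<sigma>)"
  define G where "G = (\<lambda>x. (\<sigma>\<^sup>2 - 1) * ((x - q - c / \<sigma>)\<^sup>2 - k\<^sup>2) / (2 * \<sigma>\<^sup>2))"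
  have hpos: "0 < hh \<sigma>" by (rule hh_pos[OF s])
  have k2: "k\<^sup>2 = c\<^sup>2 + hh \<sigma>" unfolding k_def using hpos by (simp add: add_nonneg_pos)
  have kpos: "0 < k" unfolding k_def using hpos by (simp add: add_nonneg_pos)
  have X: "0 < \<sigma>\<^sup>2 - 1" using s by (simp add: one_less_power)
  have dE: "\<And>x. (E has_real_derivative std_normal_density (x - q) * (1 - exp (G x))) (at x)"
  proof -
    fix x
    have "(E has_real_derivative std_normal_density ((- x - p) / \<sigma>) * (- 1 / \<sigma>) + std_normal_density (x - q)) (at x)"
      unfolding E_def by (rule Eprime_deriv) (use s in simp)
    moreover have "std_normal_density ((- x - p) / \<sigma>) * (- 1 / \<sigma>) + std_normal_density (x - q) = std_normal_density (x - q) * (1 - exp (G x))"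
      unfolding G_def k2 by (rule Eprime_eq[OF s c_def])
    ultimately show "(E has_real_derivative std_normal_density (x - q) * (1 - exp (G x))) (at x)" by simp
  qed
  have Gneg: "\<And>x. \<bar>x - q - c / \<sigma>\<bar> < k \<Longrightarrow> G x < 0"
  proof -
    fix x assume "\<bar>x - q - c / \<sigma>\<bar> < k"
    then have "\<bar>x - q - c / \<sigma>\<bar>\<^sup>2 < k\<^sup>2" by (intro power_strict_mono) auto
    then have "(x - q - c / \<sigma>)\<^sup>2 < k\<^sup>2" by simp
    then show "G x < 0" unfolding G_def using X s
      by (intro divide_neg_pos mult_pos_neg) auto
  qed
  have "std_normal_density (b - q) * (1 - exp (G b)) = 0"
    by (rule DERIV_local_min[OF dE[of b], of 1]) (auto simp: min E_def)
  then have "exp (G b) = 1" using phi_pos[of "b - q"] by simp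
  then have "G b = 0" by simp
  then have "(b - q - c / \<sigma>)\<^sup>2 = k\<^sup>2" unfolding G_def using X s by simp
  then have "b - q - c / \<sigma> = k \<or> b - q - c / \<sigma> = - k" by (simp add: power2_eq_iff)
  then show ?thesis
  proof
    assume b2: "b - q - c / \<sigma> = k"
    define b1 where "b1 = q + c / \<sigma> - k"
    have "b1 < b" using b2 kpos unfolding b1_def by simp
    have "E b1 < E b"
    proof (rule DERIV_pos_imp_increasing_open[OF \<open>b1 < b\<close>])
      fix x assume "b1 < x" "x < b"
      then have "\<bar>x - q - c / \<sigma>\<bar> < k" using b2 unfolding b1_def by auto
      then have "0 < std_normal_density (x - q) * (1 - exp (G x))"
        using Gneg phi_pos by (simp add: mult_pos_pos)
      then show "\<exists>y. (E has_real_derivative y) (at x) \<and> 0 < y" using dE by blast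
    next
      show "continuous_on {b1..b} E"
        using dE by (intro continuous_at_imp_continuous_on ballI DERIV_isCont) blast
    qed
    then show ?thesis using min[of b1] unfolding E_def by simp
  next
    assume "b - q - c / \<sigma> = - k"
    then show ?thesis unfolding k_def by simp
  qed
qed

lemma k_gt_abs: "1 < \<sigma> \<Longrightarrow> \<bar>c\<bar> < sqrt (c\<^sup>2 + hh \<sigma>)"
  using hh_pos[of \<sigma>] by (simp add: real_less_rsqrt)

lemma disp_at_min:
  assumes s: "1 < \<sigma>" and c_def: "c = \<sigma> * (p + q) / (\<sigma>\<^sup>2 - 1)"
    and b: "b = q + c / \<sigma> - sqrt (c\<^sup>2 + hh \<sigma>)"
  shows "Phi ((- b - p) / \<sigma>) - Phi (b - q) = Dfun \<sigma> c"
proof -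
  have X: "\<sigma>\<^sup>2 - 1 \<noteq> 0" "\<sigma> \<noteq> 0" using s by (auto simp: power2_eq_square) (smt (verit) mult_less_cancel_left1)
  have pq: "p + q = c * (\<sigma>\<^sup>2 - 1) / \<sigma>" using X unfolding c_def by (simp add: field_simps)
  have "(- b - p) / \<sigma> = (- (p + q) - c / \<sigma> + sqrt (c\<^sup>2 + hh \<sigma>)) / \<sigma>" unfolding b by (simp add: algebra_simps)
  also have "\<dots> = - c + sqrt (c\<^sup>2 + hh \<sigma>) / \<sigma>" unfolding pq using X
    by (simp add: field_simps power2_eq_square)
  finally show ?thesis unfolding Dfun_def b by simp
qed

lemma disp_formula_eq:
  assumes s: "1 < \<sigma>"
  shows "disp_formula d \<sigma> g = Dfun \<sigma> (2 * sqrt (real d) * \<sigma> / (\<sigma>\<^sup>2 - 1) * g)"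
proof -
  define A where "A = 2 * sqrt (real d) * \<sigma> / (\<sigma>\<^sup>2 - 1)"
  define c where "c = A * g"
  define k where "k = sqrt (c\<^sup>2 + hh \<sigma>)"
  have s0: "0 < \<sigma>" using s by simp
  have e1: "A / \<sigma> * g = c / \<sigma>" unfolding c_def by simp
  have e2: "A\<^sup>2 * g\<^sup>2 = c\<^sup>2" unfolding c_def by (simp add: power_mult_distrib)
  have e3: "sqrt ((A / \<sigma>)\<^sup>2 * g\<^sup>2 + hh \<sigma> / \<sigma>\<^sup>2) = k / \<sigma>"
  proof -
    have "(A / \<sigma>)\<^sup>2 * g\<^sup>2 + hh \<sigma> / \<sigma>\<^sup>2 = (c\<^sup>2 + hh \<sigma>) / \<sigma>\<^sup>2"
      unfolding c_def using s0 by (simp add: field_simps power_mult_distrib)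
    then show ?thesis unfolding k_def using s0 by (simp add: real_sqrt_divide)
  qed
  have lohi: "c / \<sigma> - k < - c + k / \<sigma>"
  proof -
    have "\<bar>c\<bar> < k" unfolding k_def by (rule k_gt_abs[OF s])
    moreover have "0 < 1 + 1 / \<sigma>" using s0 by (simp add: add_pos_pos)
    ultimately have "0 < (k - c) * (1 + 1 / \<sigma>)" by (intro mult_pos_pos) auto
    then show ?thesis by (simp add: algebra_simps diff_divide_distrib)
  qed
  have "disp_formula d \<sigma> g = measure std_normal {c / \<sigma> - k <..< - c + k / \<sigma>}"
    unfolding disp_formula_def Let_def A_def[symmetric] hh_def[symmetric] e1 e2 e3
    unfolding k_def by (simp add: c_def)
  also have "\<dots> = Dfun \<sigma> c" unfolding Dfun_def k_def[symmetric] by (rule std_Ioo[OF lohi])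
  finally show ?thesis unfolding c_def A_def .
qed

lemma Dfun_decr:
  assumes s: "1 < \<sigma>" and c12: "c1 < c2"
  shows "Dfun \<sigma> c2 < Dfun \<sigma> c1"
proof (rule DERIV_neg_imp_decreasing[OF c12])
  fix c :: real
  define h where "h = hh \<sigma>"
  define k where "k = sqrt (c\<^sup>2 + h)"
  have hpos: "0 < h" unfolding h_def by (rule hh_pos[OF s])
  have kpos: "0 < k" unfolding k_def using hpos by (simp add: add_nonneg_pos)
  have ck: "c < k" using k_gt_abs[OF s, of c] unfolding k_def h_def by simp
  have s0: "0 < \<sigma>" using s by simp
  have dk: "((\<lambda>c. sqrt (c\<^sup>2 + h)) has_real_derivative c / k) (at c)"
    using hpos add_nonneg_pos[of "c\<^sup>2" h] unfolding k_def
    by (auto intro!: derivative_eq_intros simp: add_nonneg_pos field_simps)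
  let ?hi = "- c + k / \<sigma>" and ?lo = "c / \<sigma> - k"
  have d_hi: "((\<lambda>c. - c + sqrt (c\<^sup>2 + h) / \<sigma>) has_real_derivative (-1 + (c / k) / \<sigma>)) (at c)"
    using DERIV_add[OF DERIV_minus[OF DERIV_ident] DERIV_cdivide[OF dk, of \<sigma>]] by simp
  have d_lo: "((\<lambda>c. c / \<sigma> - sqrt (c\<^sup>2 + h)) has_real_derivative (1 / \<sigma> - c / k)) (at c)"
    using DERIV_diff[OF DERIV_cdivide[OF DERIV_ident, of \<sigma>] dk] by simp
  have dD: "(Dfun \<sigma> has_real_derivative
      std_normal_density ?hi * (-1 + (c / k) / \<sigma>) - std_normal_density ?lo * (1 / \<sigma> - c / k)) (at c)"
    unfolding Dfun_def h_def[symmetric]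
    using DERIV_diff[OF Phi_chain[OF d_hi] Phi_chain[OF d_lo]] unfolding k_def by simp
  have "?hi\<^sup>2 - ?lo\<^sup>2 = (c\<^sup>2 - k\<^sup>2) * (1 - 1 / \<sigma>\<^sup>2)"
    using s0 by (simp add: field_simps power2_eq_square)
  also have "c\<^sup>2 - k\<^sup>2 = - h" unfolding k_def using hpos by (simp add: add_nonneg_pos)
  also have "- h * (1 - 1 / \<sigma>\<^sup>2) = - 2 * ln \<sigma>"
  proof -
    have X: "\<sigma>\<^sup>2 - 1 \<noteq> 0" using s by (auto simp: power2_eq_square) (smt (verit) mult_less_cancel_left1)
    have 1: "h * (\<sigma>\<^sup>2 - 1) = 2 * \<sigma>\<^sup>2 * ln \<sigma>" unfolding h_def hh_def using X by simp
    have 2: "- h * (1 - 1 / \<sigma>\<^sup>2) = - (h * (\<sigma>\<^sup>2 - 1)) / \<sigma>\<^sup>2" using s0 by (simp add: field_simps)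
    show ?thesis unfolding 2 1 using s0 by simp
  qed
  finally have hl: "?hi\<^sup>2 - ?lo\<^sup>2 = - 2 * ln \<sigma>" .
  have plo: "std_normal_density ?lo = std_normal_density ?hi / \<sigma>"
  proof -
    have "std_normal_density ?lo = std_normal_density ?hi * exp ((?hi\<^sup>2 - ?lo\<^sup>2) / 2)" by (rule phi_shift)
    also have "exp ((?hi\<^sup>2 - ?lo\<^sup>2) / 2) = 1 / \<sigma>" unfolding hl using s0 by (simp add: exp_minus exp_ln inverse_eq_divide)
    finally show ?thesis by simp
  qed
  have "std_normal_density ?hi * (-1 + (c / k) / \<sigma>) - std_normal_density ?lo * (1 / \<sigma> - c / k)
      = - std_normal_density ?hi * (1 + 1 / \<sigma>\<^sup>2 - 2 * (c / k) / \<sigma>)"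
    unfolding plo using s0 by (simp add: field_simps power2_eq_square)
  moreover have "0 < 1 + 1 / \<sigma>\<^sup>2 - 2 * (c / k) / \<sigma>"
  proof -
    have "c / k < 1" using ck kpos by simp
    then have "2 * (c / k) < 2" by simp
    then have a: "2 * (c / k) / \<sigma> < 2 / \<sigma>" using s0 by (rule divide_strict_right_mono)
    have "0 \<le> (1 - 1 / \<sigma>)\<^sup>2" by simp
    moreover have "(1 - 1 / \<sigma>)\<^sup>2 = 1 + 1 / \<sigma>\<^sup>2 - 2 / \<sigma>"
      by (simp add: power2_diff power_one_over)
    ultimately have "2 / \<sigma> \<le> 1 + 1 / \<sigma>\<^sup>2" by simp
    with a show ?thesis by simp
  qed
  ultimately have "std_normal_density ?hi * (-1 + (c / k) / \<sigma>) - std_normal_density ?lo * (1 / \<sigma> - c / k) < 0"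
    using phi_pos[of ?hi] by (simp add: mult_pos_pos)
  then show "\<exists>y. (Dfun \<sigma> has_real_derivative y) (at c) \<and> y < 0" using dD by blast
qed



lemma sq_sum: "norm (w::real^'d) = 1 \<Longrightarrow> (\<Sum>i\<in>UNIV. (w $ i)\<^sup>2) = 1"
  by (simp add: norm_eq_sqrt_inner inner_vec_def power2_eq_square)

lemma S_le_L: "Ssum w \<le> L1 w"
  unfolding Ssum_def L1_def by (rule sum_mono) simp

lemma L_le:
  assumes w: "norm (w::real^'d) = 1"
  shows "L1 w \<le> sqrt (real CARD('d))"
proof -
  define n where "n = real CARD('d)"
  define L where "L = L1 w"
  have n: "0 < n" unfolding n_def by simp
  have "0 \<le> (\<Sum>i\<in>UNIV. (\<bar>w $ i\<bar> - L / n)\<^sup>2)" by (rule sum_nonneg) simp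
  also have "(\<Sum>i\<in>UNIV. (\<bar>w $ i\<bar> - L / n)\<^sup>2) = (\<Sum>i\<in>UNIV. (w $ i)\<^sup>2) - 2 * (L / n) * (\<Sum>i\<in>UNIV. \<bar>w $ i\<bar>) + n * (L / n)\<^sup>2"
    by (simp add: power2_diff sum.distrib sum_subtractf sum_distrib_left sum_divide_distrib n_def algebra_simps)
  also have "\<dots> = 1 - L\<^sup>2 / n"
    using n sq_sum[OF w] unfolding L_def L1_def by (simp add: field_simps power2_eq_square)
  finally have "L\<^sup>2 \<le> n" using n by (simp add: field_simps)
  then show ?thesis unfolding L_def[symmetric] n_def[symmetric]
    by (simp add: real_le_rsqrt)
qed

definition unif :: "real^'d" where "unif = (\<chi> i. 1 / sqrt (real CARD('d)))"

lemma unif_props: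
  shows "norm (unif :: real^'d) = 1" "Ssum (unif :: real^'d) = sqrt (real CARD('d))"
    "L1 (unif :: real^'d) = sqrt (real CARD('d))"
proof -
  define n where "n = real CARD('d)"
  have n: "0 < n" unfolding n_def by simp
  have "(unif :: real^'d) \<bullet> unif = n * (1 / sqrt n)\<^sup>2"
    by (simp add: unif_def inner_vec_def n_def power2_eq_square)
  also have "\<dots> = 1" using n by (simp add: power_divide)
  finally show "norm (unif :: real^'d) = 1" by (simp add: norm_eq_sqrt_inner)
  have "Ssum (unif :: real^'d) = n * (1 / sqrt n)" by (simp add: unif_def Ssum_def n_def)
  also have "\<dots> = sqrt n" using n by (simp add: field_simps real_div_sqrt)
  finally show "Ssum (unif :: real^'d) = sqrt (real CARD('d))" unfolding n_def .
  have "L1 (unif :: real^'d) = n * (1 / sqrt n)" by (simp add: unif_def L1_def n_def)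
  also have "\<dots> = sqrt n" using n by (simp add: field_simps real_div_sqrt)
  finally show "L1 (unif :: real^'d) = sqrt (real CARD('d))" unfolding n_def .
qed

lemma generic:
  fixes R :: "real^'d \<Rightarrow> real \<Rightarrow> real \<Rightarrow> real"
  assumes s: "1 < \<sigma>"
    and Rf: "\<And>w b. norm w = 1 \<Longrightarrow> R w b 1 = Phi ((- b - P w) / \<sigma>) \<and> R w b (-1) = Phi (b - Q w)"
    and bnd: "\<And>w. norm w = 1 \<Longrightarrow> P w \<le> P0 \<and> Q w \<le> Q0"
    and u: "norm u = 1" "P u = P0" "Q u = Q0"
    and mini: "is_minimizer R w b"
  shows "disparity R w b = Dfun \<sigma> (\<sigma> * (P0 + Q0) / (\<sigma>\<^sup>2 - 1))"
proof -
  have w: "norm w = 1" and le: "\<And>w' b'. norm w' = 1 \<Longrightarrow> total_err R w b \<le> total_err R w' b'"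
    using mini unfolding is_minimizer_def by auto
  have tot: "\<And>w b. norm w = 1 \<Longrightarrow> total_err R w b = (1/2) * Phi ((- b - P w) / \<sigma>) + (1/2) * Phi (b - Q w)"
    unfolding total_err_def using Rf by simp
  have s0: "0 < \<sigma>" using s by simp
  have PQ: "P w = P0 \<and> Q w = Q0"
  proof (rule ccontr)
    assume "\<not> (P w = P0 \<and> Q w = Q0)"
    then have strict: "P w < P0 \<or> Q w < Q0" using bnd[OF w] by auto
    have a: "Phi ((- b - P0) / \<sigma>) \<le> Phi ((- b - P w) / \<sigma>)"
      using bnd[OF w] s0 by (simp add: Phi_le_iff divide_right_mono)
    have b: "Phi (b - Q0) \<le> Phi (b - Q w)" using bnd[OF w] by (simp add: Phi_le_iff)
    have "Phi ((- b - P0) / \<sigma>) < Phi ((- b - P w) / \<sigma>) \<or> Phi (b - Q0) < Phi (b - Q w)"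
      using strict s0 by (auto simp: Phi_less_iff divide_strict_right_mono)
    then have "total_err R u b < total_err R w b"
      unfolding tot[OF u(1)] tot[OF w] u using a b by auto
    with le[OF u(1), of b] show False by simp
  qed
  have minE: "\<And>b'. Phi ((- b - P0) / \<sigma>) + Phi (b - Q0) \<le> Phi ((- b' - P0) / \<sigma>) + Phi (b' - Q0)"
  proof -
    fix b'
    show "Phi ((- b - P0) / \<sigma>) + Phi (b - Q0) \<le> Phi ((- b' - P0) / \<sigma>) + Phi (b' - Q0)"
      using le[OF u(1), of b'] PQ unfolding tot[OF u(1)] tot[OF w] u by simp
  qed
  have bb: "b = Q0 + (\<sigma> * (P0 + Q0) / (\<sigma>\<^sup>2 - 1)) / \<sigma> - sqrt ((\<sigma> * (P0 + Q0) / (\<sigma>\<^sup>2 - 1))\<^sup>2 + hh \<sigma>)"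
    by (rule core_min[OF s refl minE])
  have "disparity R w b = Phi ((- b - P0) / \<sigma>) - Phi (b - Q0)"
    unfolding disparity_def using Rf[OF w] PQ by simp
  also have "\<dots> = Dfun \<sigma> (\<sigma> * (P0 + Q0) / (\<sigma>\<^sup>2 - 1))"
    by (rule disp_at_min[OF s refl bb])
  finally show ?thesis .
qed



lemma nat_disp:
  fixes w :: "real^'d"
  assumes eta: "\<eta> > 0" and s: "\<sigma> > 1" and a: "\<alpha> \<ge> 1"
    and mini: "is_minimizer (nat_err \<eta> \<sigma> \<alpha>) w b"
  shows "disparity (nat_err \<eta> \<sigma> \<alpha>) w b
     = Dfun \<sigma> (\<sigma> * (\<eta> * sqrt (real CARD('d)) + \<alpha> * \<eta> * sqrt (real CARD('d))) / (\<sigma>\<^sup>2 - 1))"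
proof (rule generic[OF s _ _ unif_props(1) _ _ mini])
  let ?r = "sqrt (real CARD('d))"
  show "\<And>w b. norm (w::real^'d) = 1 \<Longrightarrow> nat_err \<eta> \<sigma> \<alpha> w b 1 = Phi ((- b - \<eta> * Ssum w) / \<sigma>) \<and>
      nat_err \<eta> \<sigma> \<alpha> w b (- 1) = Phi (b - \<alpha> * \<eta> * Ssum w)"
    using s by (simp add: nat_err_pos nat_err_neg)
  show "\<And>w. norm (w::real^'d) = 1 \<Longrightarrow> \<eta> * Ssum w \<le> \<eta> * ?r \<and> \<alpha> * \<eta> * Ssum w \<le> \<alpha> * \<eta> * ?r"
  proof -
    fix w :: "real^'d" assume w: "norm w = 1"
    have "Ssum w \<le> ?r" using S_le_L[of w] L_le[OF w] by simp
    moreover have "0 \<le> \<alpha> * \<eta>" using eta a by simp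
    ultimately show "\<eta> * Ssum w \<le> \<eta> * ?r \<and> \<alpha> * \<eta> * Ssum w \<le> \<alpha> * \<eta> * ?r"
      using eta by (simp add: mult_left_mono)
  qed
  show "\<eta> * Ssum (unif::real^'d) = \<eta> * ?r" "\<alpha> * \<eta> * Ssum (unif::real^'d) = \<alpha> * \<eta> * ?r"
    by (simp_all add: unif_props)
qed

lemma rob_disp:
  fixes w :: "real^'d"
  assumes eta: "\<eta> > 0" and s: "\<sigma> > 1" and a: "\<alpha> \<ge> 1" and e: "0 < \<epsilon>" "\<epsilon> < \<eta>"
    and mini: "is_minimizer (rob_err \<epsilon> \<eta> \<sigma> \<alpha>) w b"
  shows "disparity (rob_err \<epsilon> \<eta> \<sigma> \<alpha>) w b
     = Dfun \<sigma> (\<sigma> * ((\<eta> * sqrt (real CARD('d)) - \<epsilon> * sqrt (real CARD('d))) + (\<alpha> * \<eta> * sqrt (real CARD('d)) - \<epsilon> * sqrt (real CARD('d)))) / (\<sigma>\<^sup>2 - 1))"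
proof (rule generic[OF s _ _ unif_props(1) _ _ mini])
  let ?r = "sqrt (real CARD('d))"
  show "\<And>w b. norm (w::real^'d) = 1 \<Longrightarrow> rob_err \<epsilon> \<eta> \<sigma> \<alpha> w b 1 = Phi ((- b - (\<eta> * Ssum w - \<epsilon> * L1 w)) / \<sigma>) \<and>
      rob_err \<epsilon> \<eta> \<sigma> \<alpha> w b (- 1) = Phi (b - (\<alpha> * \<eta> * Ssum w - \<epsilon> * L1 w))"
  proof -
    fix w :: "real^'d" and b assume w: "norm w = 1"
    have 1: "- b - (\<eta> * Ssum w - \<epsilon> * L1 w) = - b - \<eta> * Ssum w + \<epsilon> * L1 w" by simp
    have 2: "b - (\<alpha> * \<eta> * Ssum w - \<epsilon> * L1 w) = b - \<alpha> * \<eta> * Ssum w + \<epsilon> * L1 w" by simp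
    show "rob_err \<epsilon> \<eta> \<sigma> \<alpha> w b 1 = Phi ((- b - (\<eta> * Ssum w - \<epsilon> * L1 w)) / \<sigma>) \<and>
      rob_err \<epsilon> \<eta> \<sigma> \<alpha> w b (- 1) = Phi (b - (\<alpha> * \<eta> * Ssum w - \<epsilon> * L1 w))"
      unfolding 1 2 using s e w by (simp add: rob_err_pos rob_err_neg)
  qed
  show "\<And>w. norm (w::real^'d) = 1 \<Longrightarrow> \<eta> * Ssum w - \<epsilon> * L1 w \<le> \<eta> * ?r - \<epsilon> * ?r \<and>
       \<alpha> * \<eta> * Ssum w - \<epsilon> * L1 w \<le> \<alpha> * \<eta> * ?r - \<epsilon> * ?r"
  proof -
    fix w :: "real^'d" assume w: "norm w = 1"
    have SL: "Ssum w \<le> L1 w" by (rule S_le_L)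
    have Lr: "L1 w \<le> ?r" by (rule L_le[OF w])
    have "1 * \<eta> \<le> \<alpha> * \<eta>" by (rule mult_right_mono[OF a]) (use eta in simp)
    then have ae: "\<epsilon> \<le> \<alpha> * \<eta>" using e by linarith
    have m1: "\<eta> * Ssum w \<le> \<eta> * L1 w" by (rule mult_left_mono[OF SL]) (use eta in simp)
    have m2: "(\<eta> - \<epsilon>) * L1 w \<le> (\<eta> - \<epsilon>) * ?r" by (rule mult_left_mono[OF Lr]) (use e in simp)
    have m3: "(\<alpha> * \<eta>) * Ssum w \<le> (\<alpha> * \<eta>) * L1 w" by (rule mult_left_mono[OF SL]) (use ae e in simp)
    have m4: "(\<alpha> * \<eta> - \<epsilon>) * L1 w \<le> (\<alpha> * \<eta> - \<epsilon>) * ?r" by (rule mult_left_mono[OF Lr]) (use ae in simp)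
    have d1: "(\<eta> - \<epsilon>) * L1 w = \<eta> * L1 w - \<epsilon> * L1 w" "(\<eta> - \<epsilon>) * ?r = \<eta> * ?r - \<epsilon> * ?r"
      "(\<alpha> * \<eta> - \<epsilon>) * L1 w = \<alpha> * \<eta> * L1 w - \<epsilon> * L1 w" "(\<alpha> * \<eta> - \<epsilon>) * ?r = \<alpha> * \<eta> * ?r - \<epsilon> * ?r"
      by (simp_all add: left_diff_distrib)
    have A: "\<eta> * Ssum w - \<epsilon> * L1 w \<le> \<eta> * ?r - \<epsilon> * ?r" using m1 m2 d1 by linarith
    have B: "\<alpha> * \<eta> * Ssum w - \<epsilon> * L1 w \<le> \<alpha> * \<eta> * ?r - \<epsilon> * ?r" using m3 m4 d1 by linarith
    show "\<eta> * Ssum w - \<epsilon> * L1 w \<le> \<eta> * ?r - \<epsilon> * ?r \<and>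
       \<alpha> * \<eta> * Ssum w - \<epsilon> * L1 w \<le> \<alpha> * \<eta> * ?r - \<epsilon> * ?r" using A B by simp
  qed
  show "\<eta> * Ssum (unif::real^'d) - \<epsilon> * L1 (unif::real^'d) = \<eta> * ?r - \<epsilon> * ?r"
    "\<alpha> * \<eta> * Ssum (unif::real^'d) - \<epsilon> * L1 (unif::real^'d) = \<alpha> * \<eta> * ?r - \<epsilon> * ?r"
    by (simp_all add: unif_props)
qed

theorem theorem2:
  fixes \<eta> \<sigma> \<epsilon> :: real
  assumes "\<eta> > 0" and "\<sigma> > 1" and "0 < \<epsilon>" and "\<epsilon> < \<eta>"
  shows
    "(\<forall>\<alpha> \<ge> 1. \<forall>(w::real^'d) b. is_minimizer (nat_err \<eta> \<sigma> \<alpha>) w b \<longrightarrow>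
        disparity (nat_err \<eta> \<sigma> \<alpha>) w b
          = disp_formula CARD('d) \<sigma> ((1 + \<alpha>) / 2 * \<eta>))
   \<and> (\<forall>\<alpha> \<ge> 1. \<forall>(w::real^'d) b. is_minimizer (rob_err \<epsilon> \<eta> \<sigma> \<alpha>) w b \<longrightarrow>
        disparity (rob_err \<epsilon> \<eta> \<sigma> \<alpha>) w b
          = disp_formula CARD('d) \<sigma> ((1 + \<alpha>) / 2 * \<eta> - \<epsilon>))
   \<and> (\<forall>\<alpha>1 \<alpha>2 (w1::real^'d) b1 (w2::real^'d) b2.
        1 \<le> \<alpha>1 \<longrightarrow> \<alpha>1 < \<alpha>2 \<longrightarrow>
        is_minimizer (nat_err \<eta> \<sigma> \<alpha>1) w1 b1 \<longrightarrow> is_minimizer (nat_err \<eta> \<sigma> \<alpha>2) w2 b2 \<longrightarrow>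
        disparity (nat_err \<eta> \<sigma> \<alpha>2) w2 b2 < disparity (nat_err \<eta> \<sigma> \<alpha>1) w1 b1)
   \<and> (\<forall>\<alpha>1 \<alpha>2 (w1::real^'d) b1 (w2::real^'d) b2.
        1 \<le> \<alpha>1 \<longrightarrow> \<alpha>1 < \<alpha>2 \<longrightarrow>
        is_minimizer (rob_err \<epsilon> \<eta> \<sigma> \<alpha>1) w1 b1 \<longrightarrow> is_minimizer (rob_err \<epsilon> \<eta> \<sigma> \<alpha>2) w2 b2 \<longrightarrow>
        disparity (rob_err \<epsilon> \<eta> \<sigma> \<alpha>2) w2 b2 < disparity (rob_err \<epsilon> \<eta> \<sigma> \<alpha>1) w1 b1)"
proof -
  note eta = assms(1) and s = assms(2) and e = assms(3,4)
  define r where "r = sqrt (real CARD('d))"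
  have r: "0 < r" unfolding r_def by simp
  have X: "0 < \<sigma>\<^sup>2 - 1" using s by (simp add: one_less_power)
  have s0: "0 < \<sigma>" using s by simp
  have K: "0 < \<sigma> / (\<sigma>\<^sup>2 - 1)" using X s0 by simp
  define cn where "cn = (\<lambda>\<alpha>. \<sigma> * (\<eta> * r + \<alpha> * \<eta> * r) / (\<sigma>\<^sup>2 - 1))"
  define cr where "cr = (\<lambda>\<alpha>. \<sigma> * ((\<eta> * r - \<epsilon> * r) + (\<alpha> * \<eta> * r - \<epsilon> * r)) / (\<sigma>\<^sup>2 - 1))"
  have nd: "\<And>\<alpha> (w::real^'d) b. \<alpha> \<ge> 1 \<Longrightarrow> is_minimizer (nat_err \<eta> \<sigma> \<alpha>) w b \<Longrightarrow>
      disparity (nat_err \<eta> \<sigma> \<alpha>) w b = Dfun \<sigma> (cn \<alpha>)"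
    unfolding cn_def r_def by (rule nat_disp[OF eta s])
  have rd: "\<And>\<alpha> (w::real^'d) b. \<alpha> \<ge> 1 \<Longrightarrow> is_minimizer (rob_err \<epsilon> \<eta> \<sigma> \<alpha>) w b \<Longrightarrow>
      disparity (rob_err \<epsilon> \<eta> \<sigma> \<alpha>) w b = Dfun \<sigma> (cr \<alpha>)"
    unfolding cr_def r_def by (rule rob_disp[OF eta s _ e])
  have cn_eq: "\<And>\<alpha>. disp_formula CARD('d) \<sigma> ((1 + \<alpha>) / 2 * \<eta>) = Dfun \<sigma> (cn \<alpha>)"
  proof -
    fix \<alpha> :: real
    have "2 * r * \<sigma> / (\<sigma>\<^sup>2 - 1) * ((1 + \<alpha>) / 2 * \<eta>) = cn \<alpha>"
      unfolding cn_def using X by (simp add: field_simps)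
    then show "?thesis \<alpha>" using disp_formula_eq[OF s, of "CARD('d)" "(1 + \<alpha>) / 2 * \<eta>"] unfolding r_def by simp
  qed
  have cr_eq: "\<And>\<alpha>. disp_formula CARD('d) \<sigma> ((1 + \<alpha>) / 2 * \<eta> - \<epsilon>) = Dfun \<sigma> (cr \<alpha>)"
  proof -
    fix \<alpha> :: real
    have "2 * r * \<sigma> / (\<sigma>\<^sup>2 - 1) * ((1 + \<alpha>) / 2 * \<eta> - \<epsilon>) = cr \<alpha>"
      unfolding cr_def using X by (simp add: field_simps)
    then show "?thesis \<alpha>" using disp_formula_eq[OF s, of "CARD('d)" "(1 + \<alpha>) / 2 * \<eta> - \<epsilon>"] unfolding r_def by simp
  qed
  have cn_mono: "\<And>\<alpha>1 \<alpha>2. \<alpha>1 < \<alpha>2 \<Longrightarrow> cn \<alpha>1 < cn \<alpha>2"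
  proof -
    fix \<alpha>1 \<alpha>2 :: real assume "\<alpha>1 < \<alpha>2"
    then have "\<eta> * r + \<alpha>1 * \<eta> * r < \<eta> * r + \<alpha>2 * \<eta> * r" using eta r by simp
    then have "\<sigma> / (\<sigma>\<^sup>2 - 1) * (\<eta> * r + \<alpha>1 * \<eta> * r) < \<sigma> / (\<sigma>\<^sup>2 - 1) * (\<eta> * r + \<alpha>2 * \<eta> * r)"
      using K by (rule mult_strict_left_mono)
    then show "cn \<alpha>1 < cn \<alpha>2" unfolding cn_def by simp
  qed
  have cr_mono: "\<And>\<alpha>1 \<alpha>2. \<alpha>1 < \<alpha>2 \<Longrightarrow> cr \<alpha>1 < cr \<alpha>2"
  proof -
    fix \<alpha>1 \<alpha>2 :: real assume "\<alpha>1 < \<alpha>2"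
    then have "(\<eta> * r - \<epsilon> * r) + (\<alpha>1 * \<eta> * r - \<epsilon> * r) < (\<eta> * r - \<epsilon> * r) + (\<alpha>2 * \<eta> * r - \<epsilon> * r)"
      using eta r by simp
    then have "\<sigma> / (\<sigma>\<^sup>2 - 1) * ((\<eta> * r - \<epsilon> * r) + (\<alpha>1 * \<eta> * r - \<epsilon> * r)) < \<sigma> / (\<sigma>\<^sup>2 - 1) * ((\<eta> * r - \<epsilon> * r) + (\<alpha>2 * \<eta> * r - \<epsilon> * r))"
      using K by (rule mult_strict_left_mono)
    then show "cr \<alpha>1 < cr \<alpha>2" unfolding cr_def by simp
  qed
  show ?thesis
  proof (intro conjI allI impI)
    fix \<alpha> :: real and w :: "real^'d" and b
    assume "1 \<le> \<alpha>" "is_minimizer (nat_err \<eta> \<sigma> \<alpha>) w b"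
    then show "disparity (nat_err \<eta> \<sigma> \<alpha>) w b = disp_formula CARD('d) \<sigma> ((1 + \<alpha>) / 2 * \<eta>)"
      using nd cn_eq by simp
  next
    fix \<alpha> :: real and w :: "real^'d" and b
    assume "1 \<le> \<alpha>" "is_minimizer (rob_err \<epsilon> \<eta> \<sigma> \<alpha>) w b"
    then show "disparity (rob_err \<epsilon> \<eta> \<sigma> \<alpha>) w b = disp_formula CARD('d) \<sigma> ((1 + \<alpha>) / 2 * \<eta> - \<epsilon>)"
      using rd cr_eq by simp
  next
    fix \<alpha>1 \<alpha>2 :: real and w1 w2 :: "real^'d" and b1 b2
    assume "1 \<le> \<alpha>1" "\<alpha>1 < \<alpha>2" "is_minimizer (nat_err \<eta> \<sigma> \<alpha>1) w1 b1" "is_minimizer (nat_err \<eta> \<sigma> \<alpha>2) w2 b2"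
    then show "disparity (nat_err \<eta> \<sigma> \<alpha>2) w2 b2 < disparity (nat_err \<eta> \<sigma> \<alpha>1) w1 b1"
      using nd[of \<alpha>1 w1 b1] nd[of \<alpha>2 w2 b2] Dfun_decr[OF s cn_mono] by simp
  next
    fix \<alpha>1 \<alpha>2 :: real and w1 w2 :: "real^'d" and b1 b2
    assume "1 \<le> \<alpha>1" "\<alpha>1 < \<alpha>2" "is_minimizer (rob_err \<epsilon> \<eta> \<sigma> \<alpha>1) w1 b1" "is_minimizer (rob_err \<epsilon> \<eta> \<sigma> \<alpha>2) w2 b2"
    then show "disparity (rob_err \<epsilon> \<eta> \<sigma> \<alpha>2) w2 b2 < disparity (rob_err \<epsilon> \<eta> \<sigma> \<alpha>1) w1 b1"
      using rd[of \<alpha>1 w1 b1] rd[of \<alpha>2 w2 b2] Dfun_decr[OF s cr_mono] by simp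
  qed
qed

end
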